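(* Let $d\in\{2,3\}$, $k\ge 2$, and let $\mathcal P=\{p_1,\dots,p_k\}$ be distinct points in $\mathbb R^d$. For $x\notin\mathcal P$ let $u_i(x)=\frac{p_i-x}{\|p_i-x\|}$, and for $x\notin\mathcal P$ with $\sum_{i=1}^k u_i(x)\neq0$ let $v(x)=\frac{\sum_{i=1}^k u_i(x)}{\|\sum_{i=1}^k u_i(x)\|}$. Let $S(x)=\sum_{1\le i<j\le k}u_i(x)^\top u_j(x)$ be the sum of the cosines of the pairwise angles between the bearings. Then at every such $x$, the directional derivative of $S$ in the direction $v(x)$ satisfies $\nabla S(x)^\top v(x)\le 0$, with strict inequality unless $x$ and all points of $\mathcal P$ lie on a common line. In other words, moving in the direction $v$ decreases the sum of the cosines of the pairwise angles between the bearings $u_i$.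
   Context: $u_i(x)$ is the bearing (unit direction) from the position $x$ to the landmark $p_i$. The points with $\sum_i u_i(x)=0$ (outside $\mathcal P$) are geometric medians of $\mathcal P$. *)

theory Defs
  imports "HOL-Analysis.Analysis"
begin

definition bearing :: "(nat \<Rightarrow> 'a::euclidean_space) \<Rightarrow> nat \<Rightarrow> 'a \<Rightarrow> 'a" where
  "bearing p i x = (p i - x) /\<^sub>R norm (p i - x)"

definition bearing_sum :: "nat \<Rightarrow> (nat \<Rightarrow> 'a::euclidean_space) \<Rightarrow> 'a \<Rightarrow> 'a" where
  "bearing_sum k p x = (\<Sum>i<k. bearing p i x)"

definition vdir :: "nat \<Rightarrow> (nat \<Rightarrow> 'a::euclidean_space) \<Rightarrow> 'a \<Rightarrow> 'a" where
  "vdir k p x = bearing_sum k p x /\<^sub>R norm (bearing_sum k p x)"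

definition cos_sum :: "nat \<Rightarrow> (nat \<Rightarrow> 'a::euclidean_space) \<Rightarrow> 'a \<Rightarrow> real" where
  "cos_sum k p x = (\<Sum>j<k. \<Sum>i<j. bearing p i x \<bullet> bearing p j x)"

end

theory Submission
  imports Defs
begin

lemma bearing_deriv:
  fixes p :: "nat \<Rightarrow> 'a::euclidean_space"
  assumes "x \<noteq> p i"
  shows "(bearing p i has_derivative
     (\<lambda>h. (- h + (bearing p i x \<bullet> h) *\<^sub>R bearing p i x) /\<^sub>R norm (p i - x))) (at x)"
proof -
  have nz: "p i - x \<noteq> 0" using assms by simp
  have n: "((\<lambda>y. norm (p i - y)) has_derivative (\<lambda>h. (- h) \<bullet> sgn (p i - x))) (at x)"
    using has_derivative_compose[OF has_derivative_diff[OF has_derivative_const has_derivative_ident] has_derivative_norm[OF nz]]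
    by (simp add: o_def)
  have inv: "((\<lambda>y. inverse (norm (p i - y))) has_derivative
     (\<lambda>h. - (inverse (norm (p i - x)) * ((- h) \<bullet> sgn (p i - x)) * inverse (norm (p i - x))))) (at x)"
    by (rule Deriv.has_derivative_inverse[OF _ n]) (use nz in simp)
  note D = has_derivative_scaleR[OF inv has_derivative_diff[OF has_derivative_const has_derivative_ident]]
  show ?thesis unfolding bearing_def
    apply (rule has_derivative_eq_rhs[OF D])
    apply (rule ext)
    using nz by (simp add: sgn_div_norm scaleR_add_right algebra_simps power2_eq_square inverse_eq_divide inner_commute)
qed

lemma pair_sum_identity:
  fixes f :: "nat \<Rightarrow> 'a::real_inner"
  shows "(\<Sum>j<k. \<Sum>i<j. f i \<bullet> f j) = ((\<Sum>i<k. f i) \<bullet> (\<Sum>i<k. f i) - (\<Sum>i<k. f i \<bullet> f i)) / 2"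
proof (induction k)
  case 0 then show ?case by simp
next
  case (Suc k)
  have "(\<Sum>i<k. f i \<bullet> f k) = (\<Sum>i<k. f i) \<bullet> f k" by (simp add: inner_sum_left)
  then show ?case using Suc by (simp add: inner_add inner_commute field_simps)
qed

lemma bearing_norm: "x \<noteq> p i \<Longrightarrow> norm (bearing p i x) = 1"
  unfolding bearing_def by simp

lemma aux1:
  fixes w :: "'a::real_vector"
  assumes "(n::real) > 0" "U = n *\<^sub>R w" "p - x = r *\<^sub>R w" shows "p - x = (r / n) *\<^sub>R U"
proof -
  have "(r / n) *\<^sub>R U = ((r / n) * n) *\<^sub>R w" using assms(2) by (simp only: scaleR_scaleR)
  also have "\<dots> = r *\<^sub>R w" using assms(1) by simp
  finally show ?thesis using assms(3) by simp
qed
lemma aux2: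
  fixes w :: "'a::real_vector"
  assumes "(n::real) > 0" "U = - n *\<^sub>R w" "p - x = r *\<^sub>R w" shows "p - x = (- r / n) *\<^sub>R U"
proof -
  have "(- r / n) *\<^sub>R U = ((- r / n) * (- n)) *\<^sub>R w" using assms(2) by (simp only: scaleR_scaleR)
  also have "\<dots> = r *\<^sub>R w" using assms(1) by simp
  finally show ?thesis using assms(3) by simp
qed

theorem theorem1:
  fixes p :: "nat \<Rightarrow> 'a::euclidean_space" and k :: nat and x :: 'a
  assumes "DIM('a) = 2 \<or> DIM('a) = 3"
    and "k \<ge> 2"
    and "inj_on p {..<k}"
    and "x \<notin> p ` {..<k}"
    and "bearing_sum k p x \<noteq> 0"
  shows "cos_sum k p differentiable (at x)
    \<and> frechet_derivative (cos_sum k p) (at x) (vdir k p x) \<le> 0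
    \<and> (\<not> collinear (insert x (p ` {..<k}))
         \<longrightarrow> frechet_derivative (cos_sum k p) (at x) (vdir k p x) < 0)"
proof -
  define u where "u i = bearing p i x" for i
  define r where "r i = norm (p i - x)" for i
  define Du where "Du i h = (- h + (u i \<bullet> h) *\<^sub>R u i) /\<^sub>R r i" for i h
  define U where "U = bearing_sum k p x"
  have xne: "x \<noteq> p i" if "i < k" for i using assms(4) that by auto
  have rpos: "r i > 0" if "i < k" for i using xne[OF that] unfolding r_def by simp
  have un: "u i \<bullet> u i = 1" if "i < k" for i
    using bearing_norm[of x p i, OF xne[OF that]] unfolding u_def by (simp add: dot_square_norm)
  have Ueq: "U = (\<Sum>i<k. u i)" unfolding U_def bearing_sum_def u_def by simp
  have Dbi: "(bearing p i has_derivative Du i) (at x)" if "i < k" for i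
    unfolding Du_def u_def r_def using bearing_deriv[of x p i, OF xne[OF that]] .
  have DU: "((\<lambda>y. \<Sum>i<k. bearing p i y) has_derivative (\<lambda>h. \<Sum>i<k. Du i h)) (at x)"
    by (rule has_derivative_sum) (use Dbi in auto)
  have DUU: "((\<lambda>y. (\<Sum>i<k. bearing p i y) \<bullet> (\<Sum>i<k. bearing p i y)) has_derivative
      (\<lambda>h. U \<bullet> (\<Sum>i<k. Du i h) + (\<Sum>i<k. Du i h) \<bullet> U)) (at x)"
    using has_derivative_inner[OF DU DU] unfolding Ueq u_def by simp
  have DT: "((\<lambda>y. \<Sum>i<k. bearing p i y \<bullet> bearing p i y) has_derivative
      (\<lambda>h. \<Sum>i<k. u i \<bullet> Du i h + Du i h \<bullet> u i)) (at x)"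
    by (rule has_derivative_sum) (use has_derivative_inner[OF Dbi Dbi] in \<open>auto simp: u_def\<close>)
  have cs: "cos_sum k p = (\<lambda>y. ((\<Sum>i<k. bearing p i y) \<bullet> (\<Sum>i<k. bearing p i y)
      - (\<Sum>i<k. bearing p i y \<bullet> bearing p i y)) / 2)"
    unfolding cos_sum_def by (rule ext) (rule pair_sum_identity)
  define D where "D h = ((U \<bullet> (\<Sum>i<k. Du i h) + (\<Sum>i<k. Du i h) \<bullet> U)
      - (\<Sum>i<k. u i \<bullet> Du i h + Du i h \<bullet> u i)) / 2" for h
  have DC: "(cos_sum k p has_derivative D) (at x)"
    unfolding cs D_def
    by (rule has_derivative_eq_rhs[OF has_derivative_divide'[OF has_derivative_diff[OF DUU DT] has_derivative_const]]) auto
  define v where "v = U /\<^sub>R norm U"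
  have Upos: "norm U > 0" using assms(5) unfolding U_def by simp
  have vd: "vdir k p x = v" unfolding vdir_def v_def U_def ..
  have fd: "frechet_derivative (cos_sum k p) (at x) = D"
    using frechet_derivative_at[OF DC] by simp
  have uDu: "u i \<bullet> Du i h = 0" if "i < k" for i h
    unfolding Du_def using un[OF that] by (simp add: inner_add_right inner_diff_right algebra_simps)
  have Dh: "D h = (\<Sum>i<k. U \<bullet> Du i h)" for h
  proof -
    have "(\<Sum>i<k. u i \<bullet> Du i h + Du i h \<bullet> u i) = 0"
      by (rule sum.neutral) (use uDu in \<open>auto simp: inner_commute\<close>)
    then show ?thesis unfolding D_def by (simp add: inner_commute inner_sum_right)
  qed
  define t where "t i = ((u i \<bullet> U)\<^sup>2 - U \<bullet> U) / (norm U * r i)" for i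
  have tm: "U \<bullet> Du i v = t i" if "i < k" for i
  proof -
    have "U \<bullet> Du i v = (- (U \<bullet> v) + (u i \<bullet> v) * (U \<bullet> u i)) / r i"
      unfolding Du_def by (simp add: inner_add_right divide_inverse algebra_simps)
    moreover have "U \<bullet> v = norm U" unfolding v_def using Upos
      by (simp add: power2_norm_eq_inner[symmetric] power2_eq_square)
    moreover have "u i \<bullet> v = (u i \<bullet> U) / norm U" unfolding v_def by (simp add: divide_inverse)
    moreover have "U \<bullet> U = (norm U)\<^sup>2" by (simp add: power2_norm_eq_inner)
    ultimately show ?thesis unfolding t_def using Upos rpos[OF that]
      by (simp add: field_simps inner_commute power2_eq_square)
  qed
  have Dv: "D v = (\<Sum>i<k. t i)" unfolding Dh using tm by simp
  have tle: "t i \<le> 0" if "i < k" for i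
  proof -
    have "\<bar>u i \<bullet> U\<bar> \<le> norm (u i) * norm U" by (rule Cauchy_Schwarz_ineq2)
    moreover have "norm (u i) = 1" using un[OF that] by (simp add: norm_eq_sqrt_inner)
    ultimately have "\<bar>u i \<bullet> U\<bar> \<le> norm U" by simp
    then have "(u i \<bullet> U)\<^sup>2 \<le> (norm U)\<^sup>2" by (metis abs_ge_zero power2_abs power_mono)
    then show ?thesis unfolding t_def using Upos rpos[OF that]
      by (simp add: divide_le_0_iff power2_norm_eq_inner)
  qed
  have part2: "D v \<le> 0" unfolding Dv by (rule sum_nonpos) (use tle in auto)
  have part3: "D v < 0" if nc: "\<not> collinear (insert x (p ` {..<k}))"
  proof (rule ccontr)
    assume "\<not> D v < 0"
    then have "(\<Sum>i<k. - t i) = 0" using part2 unfolding Dv by (simp add: sum_negf)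
    then have t0: "t i = 0" if "i < k" for i
      using sum_nonneg_eq_0_iff[of "{..<k}" "\<lambda>i. - t i"] tle that by auto
    have lin: "\<exists>c. p i - x = c *\<^sub>R U" if "i < k" for i
    proof -
      have nu: "norm (u i) = 1" using un[OF that] by (simp add: norm_eq_sqrt_inner)
      have "(u i \<bullet> U)\<^sup>2 = (norm U)\<^sup>2"
        using t0[OF that] Upos rpos[OF that] unfolding t_def by (simp add: power2_norm_eq_inner)
      then have "sqrt ((u i \<bullet> U)\<^sup>2) = sqrt ((norm U)\<^sup>2)" by simp
      then have "\<bar>u i \<bullet> U\<bar> = norm (u i) * norm U" using nu by simp
      then have "U = norm U *\<^sub>R u i \<or> U = - norm U *\<^sub>R u i"
        using norm_cauchy_schwarz_abs_eq[of "u i" U] nu by simp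
      moreover have pe: "p i - x = r i *\<^sub>R u i" unfolding u_def r_def bearing_def using rpos[OF that]
        unfolding r_def by simp
      ultimately show ?thesis using aux1[OF Upos] aux2[OF Upos] by metis
    qed
    have lin2: "\<exists>c. z - x = c *\<^sub>R U" if "z \<in> insert x (p ` {..<k})" for z
    proof -
      from that consider "z = x" | i where "i < k" "z = p i" by auto
      then show ?thesis
      proof cases
        case 1 then show ?thesis by (intro exI[of _ 0]) simp
      next
        case 2 then show ?thesis using lin by blast
      qed
    qed
    have "collinear (insert x (p ` {..<k}))"
      unfolding collinear_def
    proof (rule exI[of _ U], intro ballI)
      fix z w assume "z \<in> insert x (p ` {..<k})" "w \<in> insert x (p ` {..<k})"
      then obtain a b where "z - x = a *\<^sub>R U" "w - x = b *\<^sub>R U" using lin2 by blast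
      moreover have "z - w = (z - x) - (w - x)" by simp
      ultimately have "z - w = (a - b) *\<^sub>R U" by (simp add: scaleR_diff_left)
      then show "\<exists>c. z - w = c *\<^sub>R U" by blast
    qed
    then show False using nc by simp
  qed
  show ?thesis using DC part2 part3 unfolding fd vd differentiable_def by blast
qed
end
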